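(* Let $(p,l)$ be an irregular pair with $\Delta_{(p,l)}\neq0$. Let $r\ge2$ be an integer and let $(p,s_1,\ldots,s_r)\in\widehat{\Psi}^{\rm irr}_r$ be the associated pair of the irregular pair of order $r$ corresponding to $(p,l)$. For $u\ge1$ let $(p,l_u)$ be the irregular pair of order $u$ corresponding to $(p,l)$, and let $A(p^u)=\min_{k\in\mathbb{N}_0}\{m=l_u+k\varphi(p^u): \operatorname{num}(B_m/m)/\operatorname{num}(B_m/(m(m-1)))=p^u\}$. If $(p,s_1,s_2,\ldots,s_r)\neq(p,l,l-1,\ldots,l-1)$, then $A(p^u)$ has no solution (the set is empty) for all $u\ge r$.
   Context: $B_n$ denotes the $n$-th Bernoulli number ($\frac{z}{e^z-1}=\sum_{n\ge0}B_n\frac{z^n}{n!}$); $\operatorname{num}(r)$ is the numerator of a rational number $r$ in lowest terms; $\varphi$ is Euler's function. For an odd prime $p$, $(p,l)$ is an irregular pair if $l$ is even, $2\le l\le p-3$ and $p\mid B_l$. For $n\ge1$, $(p,l)$ is an irregular pair of order $n$ if $l$ is even, $2\le l<\varphi(p^n)$ and $p^n\mid B_l/l$; the set of these is $\Psi^{\rm irr}_n$. For $(p,l)\in\Psi^{\rm irr}_n$ write $l=\sum_{\nu=1}^n s_\nu\varphi(p^{\nu-1})$ with $0\le s_\nu<p$; $(p,s_1,\ldots,s_n)$ is the associated pair and the set of these is $\widehat{\Psi}^{\rm irr}_n$. For an irregular pair $(p,l)$, $\Delta_{(p,l)}$ is the integer in $[0,p)$ with $\Delta_{(p,l)}\equiv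 p^{-1}\left(\frac{B_{l+\varphi(p)}}{l+\varphi(p)}-\frac{B_l}{l}\right)\pmod p$. Known fact (from earlier work): if $\Delta_{(p,l)}\neq0$, there is a unique sequence $(s_\nu)_{\nu\ge1}$ with $s_1=l$ and $(p,s_1,\ldots,s_n)\in\widehat{\Psi}^{\rm irr}_n$ for every $n\ge1$; the corresponding pair $(p,l_n)$ with $l_n=\sum_{\nu=1}^n s_\nu\varphi(p^{\nu-1})$ is the irregular pair of order $n$ corresponding to $(p,l)$. *)

theory Defs
  imports "HOL-Computational_Algebra.Formal_Power_Series" "HOL-Number_Theory.Number_Theory"
begin

definition bernoulli :: "nat \<Rightarrow> rat" where
  "bernoulli n = fact n * fps_nth (fps_X / (fps_exp 1 - 1) :: rat fps) n"

definition num :: "rat \<Rightarrow> int" where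
  "num r = fst (quotient_of r)"

definition rat_dvd :: "int \<Rightarrow> rat \<Rightarrow> bool" where
  "rat_dvd a r \<longleftrightarrow> a dvd num r"

text \<open>Congruence of rationals modulo p: x - y is p-integral and divisible by p.\<close>
definition rat_cong :: "nat \<Rightarrow> rat \<Rightarrow> rat \<Rightarrow> bool" where
  "rat_cong p x y \<longleftrightarrow> rat_dvd (int p) (x - y)"

definition irregular_pair :: "nat \<Rightarrow> nat \<Rightarrow> bool" where
  "irregular_pair p l \<longleftrightarrow> prime p \<and> odd p \<and> even l \<and> 2 \<le> l \<and> l + 3 \<le> p
     \<and> rat_dvd (int p) (bernoulli l)"

definition irregular_pair_order :: "nat \<Rightarrow> nat \<Rightarrow> nat \<Rightarrow> bool" where
  "irregular_pair_order n p l \<longleftrightarrow> prime p \<and> odd p \<and> even l \<and> 2 \<le> l \<and> l < totient (p ^ n)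
     \<and> rat_dvd (int p ^ n) (bernoulli l / of_nat l)"

definition assoc_l :: "nat \<Rightarrow> (nat \<Rightarrow> nat) \<Rightarrow> nat \<Rightarrow> nat" where
  "assoc_l p s n = (\<Sum>\<nu>=1..n. s \<nu> * totient (p ^ (\<nu> - 1)))"

definition assoc_pair :: "nat \<Rightarrow> nat \<Rightarrow> (nat \<Rightarrow> nat) \<Rightarrow> bool" where
  "assoc_pair n p s \<longleftrightarrow> (\<forall>\<nu>\<in>{1..n}. s \<nu> < p) \<and> irregular_pair_order n p (assoc_l p s n)"

definition Delta :: "nat \<Rightarrow> nat \<Rightarrow> nat" where
  "Delta p l = (THE d. d < p \<and>
     rat_cong p ((bernoulli (l + totient p) / of_nat (l + totient p) - bernoulli l / of_nat l) / of_nat p)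
       (of_nat d))"

definition A_set :: "nat \<Rightarrow> nat \<Rightarrow> nat \<Rightarrow> nat set" where
  "A_set p u lu = {m. \<exists>k. m = lu + k * totient (p ^ u) \<and>
     of_int (num (bernoulli m / of_nat m)) / of_int (num (bernoulli m / (of_nat m * (of_nat m - 1))))
       = (of_nat p ^ u :: rat)}"

end

theory Submission
  imports Defs
begin

lemma ratio_dvd:
  fixes x :: rat and c :: int and P :: int
  assumes c: "c \<noteq> 0" and P: "P \<noteq> 0"
    and eq: "of_int (num x) / of_int (num (x / of_int c)) = (of_int P :: rat)"
  shows "P dvd c"
proof -
  obtain a b where ab: "quotient_of x = (a, b)" by (cases "quotient_of x") auto
  obtain a' b' where ab': "quotient_of (x / of_int c) = (a', b')" by (cases "quotient_of (x / of_int c)") auto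
  have na: "num x = a" and na': "num (x / of_int c) = a'" using ab ab' by (simp_all add: num_def)
  have b0: "b > 0" using quotient_of_denom_pos[OF ab] .
  have b0': "b' > 0" using quotient_of_denom_pos[OF ab'] .
  have cop: "coprime a b" using quotient_of_coprime[OF ab] .
  have xd: "x = of_int a / of_int b" using quotient_of_div[OF ab] .
  have yd: "x / of_int c = of_int a' / of_int b'" using quotient_of_div[OF ab'] .
  have a'0: "a' \<noteq> 0"
  proof
    assume "a' = 0"
    then have "of_int (num x) / of_int (num (x / of_int c)) = (0::rat)" using na' by simp
    with eq P show False by simp
  qed
  have "(of_int a :: rat) / of_int a' = of_int P" using eq na na' by simp
  then have "(of_int a :: rat) = of_int P * of_int a'" using a'0 by (simp add: divide_eq_eq)
  then have "(of_int a :: rat) = of_int (P * a')" by simp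
  then have aP: "a = P * a'" by (simp only: of_int_eq_iff)
  have "of_int a / of_int b = (of_int c * (of_int a' / of_int b') :: rat)"
  proof -
    have "x = of_int c * (x / of_int c)" using c by simp
    also have "\<dots> = of_int c * (of_int a' / of_int b')" by (simp only: yd)
    finally show ?thesis by (metis xd)
  qed
  then have "of_int a / of_int b = (of_int (c * a') / of_int b' :: rat)" by simp
  then have "of_int a * of_int b' = (of_int (c * a') * of_int b :: rat)"
    using b0 b0' by (simp add: frac_eq_eq del: of_int_mult)
  then have "of_int (a * b') = (of_int (c * a' * b) :: rat)" by simp
  then have "a * b' = c * a' * b" by (simp only: of_int_eq_iff)
  then have "P * b' * a' = (c * b) * a'" using aP by (simp add: algebra_simps)
  then have "P * b' = c * b" using a'0 by (rule mult_right_cancel[THEN iffD1, rotated])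
  then have "P dvd c * b" by (metis dvd_triv_left)
  moreover have "coprime P b" using cop unfolding aP by (simp add: coprime_mult_left_iff)
  ultimately show ?thesis by (simp add: coprime_dvd_mult_left_iff)
qed

lemma assoc_l_Suc: "assoc_l p s (Suc n) = assoc_l p s n + s (Suc n) * totient (p ^ n)"
  unfolding assoc_l_def by (simp add: sum.cl_ivl_Suc)

lemma assoc_l_tail:
  assumes pr: "prime p" and "a + 1 \<le> u"
  shows "\<exists>t. assoc_l p s u = assoc_l p s (a + 1) + p ^ a * t"
  using assms(2)
proof (induction u rule: dec_induct)
  case base
  then show ?case by (rule exI[of _ 0]) simp
next
  case (step n)
  then obtain t where t: "assoc_l p s n = assoc_l p s (a + 1) + p ^ a * t" by blast
  have "totient (p ^ n) = p ^ (n - 1) * (p - 1)" using pr step.hyps by (simp add: totient_prime_power)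
  moreover have "p ^ (n - 1) = p ^ a * p ^ (n - 1 - a)" using step.hyps
    by (simp add: power_add[symmetric])
  ultimately have "totient (p ^ n) = p ^ a * (p ^ (n - 1 - a) * (p - 1))" by simp
  then have "assoc_l p s (Suc n) = assoc_l p s (a + 1) + p ^ a * (t + s (Suc n) * (p ^ (n - 1 - a) * (p - 1)))"
    using t by (simp add: assoc_l_Suc algebra_simps)
  then show ?case by blast
qed

lemma assoc_l_closed:
  assumes pr: "prime p" and s1: "s 1 = l" and l1: "l \<ge> 1"
    and all: "\<forall>\<nu>\<in>{2..j+1}. s \<nu> = l - 1"
  shows "assoc_l p s (j + 1) = 1 + (l - 1) * p ^ j"
  using all
proof (induction j)
  case 0
  then show ?case using s1 l1 by (simp add: assoc_l_def)
next
  case (Suc j)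
  then have IH: "assoc_l p s (j + 1) = 1 + (l - 1) * p ^ j" by simp
  have sj: "s (Suc (j + 1)) = l - 1" using Suc.prems by simp
  have tot: "totient (p ^ (j + 1)) = p ^ j * (p - 1)" using totient_prime_power_Suc[OF pr, of j] by simp
  have p1: "p \<ge> 1" using pr prime_gt_0_nat by (simp add: Suc_leI)
  have "assoc_l p s (Suc j + 1) = 1 + (l - 1) * p ^ j + (l - 1) * (p ^ j * (p - 1))"
    using IH sj tot by (simp add: assoc_l_Suc)
  also have "\<dots> = 1 + (l - 1) * (p ^ j * (1 + (p - 1)))" by (simp add: algebra_simps)
  also have "\<dots> = 1 + (l - 1) * p ^ Suc j" using p1 by (simp add: mult.commute)
  finally show ?case .
qed

lemma digits:
  assumes pr: "prime p" and s1: "s 1 = l" and l1: "l \<ge> 1" and lp: "l \<le> p"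
    and sp: "\<forall>\<nu>\<in>{1..u}. s \<nu> < p"
    and dv: "p ^ (u - 1) dvd assoc_l p s u - 1" and L1: "assoc_l p s u \<ge> 1"
  shows "\<forall>j. j < u \<longrightarrow> (\<forall>\<nu>\<in>{2..j+1}. s \<nu> = l - 1)"
proof (intro allI)
  fix j
  show "j < u \<longrightarrow> (\<forall>\<nu>\<in>{2..j+1}. s \<nu> = l - 1)"
  proof (induction j)
    case 0
    then show ?case by simp
  next
    case (Suc j)
    show ?case
    proof
      assume ju: "Suc j < u"
      then have IH: "\<forall>\<nu>\<in>{2..j+1}. s \<nu> = l - 1" using Suc.IH by simp
      have cl: "assoc_l p s (j + 1) = 1 + (l - 1) * p ^ j"
        using assoc_l_closed[OF pr s1 l1 IH] .
      have tot: "totient (p ^ (j + 1)) = p ^ j * (p - 1)" using totient_prime_power_Suc[OF pr, of j] by simp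
      define x where "x = s (j + 2)"
      have a2: "assoc_l p s (j + 2) = 1 + (l - 1) * p ^ j + x * (p ^ j * (p - 1))"
        using cl tot assoc_l_Suc[of p s "j + 1"] by (simp add: x_def)
      obtain t where t: "assoc_l p s u = assoc_l p s (j + 1 + 1) + p ^ (j + 1) * t"
        using assoc_l_tail[OF pr, of "j + 1" u s] ju by auto
      have "p ^ (j + 1) dvd p ^ (u - 1)" by (rule le_imp_power_dvd) (use ju in simp)
      then have "p ^ (j + 1) dvd assoc_l p s u - 1" using dv dvd_trans by blast
      moreover have "assoc_l p s u - 1 = p ^ j * ((l - 1) + x * (p - 1)) + p ^ (j + 1) * t"
        using t a2 by (simp add: algebra_simps)
      ultimately have "p ^ (j + 1) dvd p ^ j * ((l - 1) + x * (p - 1))"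
        by (simp add: dvd_add_left_iff)
      then have "p ^ j * p dvd p ^ j * ((l - 1) + x * (p - 1))" by (simp add: mult.commute)
      then have pd: "p dvd (l - 1) + x * (p - 1)"
        using pr by (simp add: prime_gt_0_nat)
      have p1: "p \<ge> 1" using pr prime_gt_0_nat by (simp add: Suc_leI)
      have "(l - 1) + x * p = ((l - 1) + x * (p - 1)) + x"
      proof -
        have "x * p = x * (p - 1) + x" using p1 by (cases p) simp_all
        then show ?thesis by simp
      qed
      then have "((l - 1) + x * p) mod p = (((l - 1) + x * (p - 1)) + x) mod p" by (simp only:)
      also have "\<dots> = (((l - 1) + x * (p - 1)) mod p + x) mod p" by (simp only: mod_add_left_eq)
      also have "\<dots> = x mod p" using pd by simp
      finally have "(l - 1) mod p = x mod p" by simp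
      moreover have "x < p" using sp ju by (simp add: x_def)
      moreover have "l - 1 < p" using lp l1 by simp
      ultimately have "x = l - 1" by simp
      then show "\<forall>\<nu>\<in>{2..Suc j+1}. s \<nu> = l - 1" using IH
        by (auto simp: x_def le_Suc_eq)
    qed
  qed
qed

theorem corollary3p5:
  fixes p l r :: nat and s :: "nat \<Rightarrow> nat"
  assumes "irregular_pair p l"
    and "Delta p l \<noteq> 0"
    and "s 1 = l"
    and "\<forall>n\<ge>1. assoc_pair n p s"
    and "r \<ge> 2"
    and "\<not> (\<forall>\<nu>\<in>{2..r}. s \<nu> = l - 1)"
  shows "\<forall>u\<ge>r. A_set p u (assoc_l p s u) = {}"
proof (intro allI impI)
  fix u assume ur: "u \<ge> r"
  have pr: "prime p" and l2: "l \<ge> 2" and lp: "l + 3 \<le> p"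
    using assms(1) by (auto simp: irregular_pair_def)
  have u1: "u \<ge> 1" using ur assms(5) by simp
  have ap: "assoc_pair u p s" using assms(4) u1 by simp
  define L where "L = assoc_l p s u"
  have sp: "\<forall>\<nu>\<in>{1..u}. s \<nu> < p" using ap by (simp add: assoc_pair_def)
  have L2: "L \<ge> 2" using ap by (simp add: assoc_pair_def irregular_pair_order_def L_def)
  show "A_set p u (assoc_l p s u) = {}"
  proof (rule ccontr)
    assume "A_set p u (assoc_l p s u) \<noteq> {}"
    then obtain m where "m \<in> A_set p u L" unfolding L_def by blast
    then obtain k where mk: "m = L + k * totient (p ^ u)" and
      eq: "of_int (num (bernoulli m / of_nat m)) / of_int (num (bernoulli m / (of_nat m * (of_nat m - 1))))
       = (of_nat p ^ u :: rat)"
      unfolding A_set_def by blast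
    have m2: "m \<ge> 2" using mk L2 by simp
    have e1: "bernoulli m / (of_nat m * (of_nat m - 1)) = (bernoulli m / of_nat m) / of_int (int m - 1)"
      by simp
    have e2: "(of_nat p ^ u :: rat) = of_int (int p ^ u)" by simp
    have "int p ^ u dvd int m - 1"
      apply (rule ratio_dvd[of "int m - 1" "int p ^ u" "bernoulli m / of_nat m"])
      using m2 pr eq unfolding e1 e2 by (auto simp: prime_gt_0_nat)
    moreover have "int m - 1 = int (m - 1)" using m2 by simp
    ultimately have "p ^ u dvd m - 1" by (metis of_nat_dvd_iff of_nat_power)
    moreover have "p ^ (u - 1) dvd p ^ u" by (rule le_imp_power_dvd) simp
    ultimately have d1: "p ^ (u - 1) dvd m - 1" using dvd_trans by blast
    have "totient (p ^ u) = p ^ (u - 1) * (p - 1)" using pr u1 by (simp add: totient_prime_power)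
    then have d2: "p ^ (u - 1) dvd k * totient (p ^ u)" by simp
    have "m - 1 = (L - 1) + k * totient (p ^ u)" using mk L2 by simp
    then have dv: "p ^ (u - 1) dvd L - 1" using d1 d2 by (metis dvd_add_left_iff)
    have "\<forall>j. j < u \<longrightarrow> (\<forall>\<nu>\<in>{2..j+1}. s \<nu> = l - 1)"
      using digits[OF pr assms(3) _ _ sp] dv L2 l2 lp unfolding L_def by simp
    then have "\<forall>\<nu>\<in>{2..u}. s \<nu> = l - 1" using u1 by (metis Suc_diff_1 Suc_eq_plus1 less_Suc_eq_le le_refl diff_less zero_less_one order_less_le_trans)
    then show False using assms(6) ur by auto
  qed
qed

end
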